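(* Let $H>0$ and $S_H=\{z\in\mathbb{C}:\,|\operatorname{Im} z|\le H\}$. For every $m\in\mathbb{N}$ there exists a function $\Psi_m\in L^1(\mathbb{R})$ with compact support such that its c-Fourier transform $\hat\Psi_m^c(z)=\int_{\mathbb{R}}\Psi_m(t)e^{-2\pi i z t}\,dt$ satisfies, for some constant $C>0$, $$|\hat\Psi_m^c(z)|\le C(\max\{1,|z|\})^{-m}\quad\text{for all } z\in S_H,$$ and $\operatorname{Re}\hat\Psi_m^c(z)>0$ for all $z\in S_H$. *)

theory Defs
  imports "HOL-Analysis.Analysis"
begin

definition c_fourier :: "(real \<Rightarrow> complex) \<Rightarrow> complex \<Rightarrow> complex" where
  "c_fourier Psi z = (LINT t|lborel. Psi t * exp (- (2 * complex_of_real pi * \<i> * z * complex_of_real t)))"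

definition strip :: "real \<Rightarrow> complex set" where
  "strip H = {z. \<bar>Im z\<bar> \<le> H}"

end

theory Submission
  imports Defs
begin


definition ef :: "complex \<Rightarrow> real \<Rightarrow> complex" where
  "ef z t = exp (- (2 * complex_of_real pi * \<i> * z * complex_of_real t))"

lemma c_fourier_ef: "c_fourier Psi z = (LINT t|lborel. Psi t * ef z t)"
  unfolding c_fourier_def ef_def ..

lemma ef_meas[measurable]: "ef z \<in> borel_measurable borel"
  unfolding ef_def by measurable

lemma norm_ef: "cmod (ef z t) = exp (2 * pi * Im z * t)"
  unfolding ef_def by (simp add: algebra_simps)

lemma ef_add: "ef z (s + u) = ef z s * ef z u"
  unfolding ef_def by (simp add: algebra_simps flip: exp_add)

definition good :: "real \<Rightarrow> real \<Rightarrow> (real \<Rightarrow> complex) \<Rightarrow> bool" where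
  "good R B f \<longleftrightarrow> f \<in> borel_measurable borel \<and> (\<forall>t. cmod (f t) \<le> B) \<and> (\<forall>t. R < \<bar>t\<bar> \<longrightarrow> f t = 0)"

lemma intg_bdd:
  fixes f :: "real \<Rightarrow> complex"
  assumes m: "f \<in> borel_measurable borel" and b: "\<And>t. cmod (f t) \<le> B" and s: "\<And>t. R < \<bar>t\<bar> \<Longrightarrow> f t = 0"
  shows "integrable lborel f"
proof -
  have "integrable lborel (\<lambda>t. indicator {-R..R} t * B :: real)"
    by (intro integrable_mult_left integrable_real_indicator) (auto simp: emeasure_lborel_Icc_eq)
  then show ?thesis
  proof (rule Bochner_Integration.integrable_bound)
    show "f \<in> borel_measurable lborel" using m by simp
    show "AE x in lborel. norm (f x) \<le> norm (indicator {- R..R} x * B)"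
    proof (rule AE_I2)
      fix x show "norm (f x) \<le> norm (indicator {- R..R} x * B)"
        using b[of x] s[of x] by (cases "\<bar>x\<bar> \<le> R") (auto simp: indicator_def abs_le_iff)
    qed
  qed
qed

lemma norm_int_bdd:
  fixes f :: "real \<Rightarrow> complex"
  assumes m: "f \<in> borel_measurable borel" and b: "\<And>t. cmod (f t) \<le> B" and s: "\<And>t. R < \<bar>t\<bar> \<Longrightarrow> f t = 0"
    and R: "0 \<le> R"
  shows "cmod (LINT t|lborel. f t) \<le> B * (2 * R)"
proof -
  have i1: "integrable lborel (\<lambda>t. indicator {-R..R} t * B :: real)"
    by (intro integrable_mult_left integrable_real_indicator) (auto simp: emeasure_lborel_Icc_eq)
  have "cmod (LINT t|lborel. f t) \<le> (LINT t|lborel. indicator {-R..R} t * B)"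
  proof (rule Bochner_Integration.integral_norm_bound_integral)
    show "integrable lborel f" by (rule intg_bdd[OF m b s])
    show "integrable lborel (\<lambda>t. indicator {-R..R} t * B :: real)" by (rule i1)
    fix x show "norm (f x) \<le> indicator {- R..R} x * B"
        using b[of x] s[of x] by (cases "\<bar>x\<bar> \<le> R") (auto simp: indicator_def abs_le_iff)
  qed
  also have "\<dots> = B * (2 * R)" using R by (simp add: measure_def emeasure_lborel_Icc_eq)
  finally show ?thesis .
qed


definition conv :: "(real \<Rightarrow> complex) \<Rightarrow> (real \<Rightarrow> complex) \<Rightarrow> real \<Rightarrow> complex" where
  "conv f h t = (LINT s|lborel. f s * h (t - s))"

lemma conv_meas:
  assumes [measurable]: "f \<in> borel_measurable borel" "h \<in> borel_measurable borel"
  shows "conv f h \<in> borel_measurable borel"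
proof -
  have "(\<lambda>t. LINT s|lborel. f s * h (t - s)) \<in> borel_measurable borel"
    by (rule lborel.borel_measurable_lebesgue_integral) measurable
  then show ?thesis unfolding conv_def[abs_def] .
qed

lemma conv_good:
  assumes f: "good R1 B1 f" and h: "good R2 B2 h" and R1: "0 \<le> R1"
  shows "good (R1 + R2) (B1 * B2 * (2 * R1)) (conv f h)"
proof -
  have [measurable]: "f \<in> borel_measurable borel" "h \<in> borel_measurable borel"
    using f h by (auto simp: good_def)
  have bf: "\<And>t. cmod (f t) \<le> B1" and sf: "\<And>t. R1 < \<bar>t\<bar> \<Longrightarrow> f t = 0"
    using f by (auto simp: good_def)
  have bh: "\<And>t. cmod (h t) \<le> B2" and sh: "\<And>t. R2 < \<bar>t\<bar> \<Longrightarrow> h t = 0"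
    using h by (auto simp: good_def)
  have B2: "0 \<le> B2" using bh[of 0] norm_ge_zero order_trans by blast
  have B1: "0 \<le> B1" using bf[of 0] norm_ge_zero order_trans by blast
  have "cmod (conv f h t) \<le> B1 * B2 * (2 * R1)" for t
    unfolding conv_def
  proof (rule norm_int_bdd[OF _ _ _ R1])
    show "(\<lambda>s. f s * h (t - s)) \<in> borel_measurable borel" by measurable
    fix s show "cmod (f s * h (t - s)) \<le> B1 * B2"
      unfolding norm_mult by (intro mult_mono bf bh B2 B1) (auto)
    assume "R1 < \<bar>s\<bar>" then show "f s * h (t - s) = 0" using sf by simp
  qed
  moreover have "conv f h t = 0" if "R1 + R2 < \<bar>t\<bar>" for t
  proof -
    have "f s * h (t - s) = 0" for s
    proof (cases "R1 < \<bar>s\<bar>")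
      case True then show ?thesis using sf by simp
    next
      case False then have "R2 < \<bar>t - s\<bar>" using that by linarith
      then show ?thesis using sh by simp
    qed
    then have "(\<lambda>s. f s * h (t - s)) = (\<lambda>s. 0)" by (rule ext)
    then show ?thesis unfolding conv_def by simp
  qed
  ultimately show ?thesis unfolding good_def using conv_meas by auto
qed


lemma translate_int:
  fixes k :: "real \<Rightarrow> complex"
  shows "(LINT t|lborel. k (t - s)) = (LINT t|lborel. k t)"
  using lborel_integral_real_affine[of 1 k "-s"] by simp

lemma conv_fourier:
  assumes f: "good R1 B1 f" and h: "good R2 B2 h" and R1: "0 \<le> R1" and R2: "0 \<le> R2"
  shows "c_fourier (conv f h) z = c_fourier f z * c_fourier h z"
proof -
  have [measurable]: "f \<in> borel_measurable borel" "h \<in> borel_measurable borel"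
    using f h by (auto simp: good_def)
  have bf: "\<And>t. cmod (f t) \<le> B1" and sf: "\<And>t. R1 < \<bar>t\<bar> \<Longrightarrow> f t = 0"
    using f by (auto simp: good_def)
  have bh: "\<And>t. cmod (h t) \<le> B2" and sh: "\<And>t. R2 < \<bar>t\<bar> \<Longrightarrow> h t = 0"
    using h by (auto simp: good_def)
  have B2: "0 \<le> B2" using bh[of 0] norm_ge_zero order_trans by blast
  have B1: "0 \<le> B1" using bf[of 0] norm_ge_zero order_trans by blast
  define F where "F = (\<lambda>s t. f s * h (t - s) * ef z t)"
  define K where "K = B1 * B2 * exp (2 * pi * \<bar>Im z\<bar> * (R1 + R2))"
  define S where "S = {-R1..R1} \<times> {-(R1+R2)..R1+R2}"
  have Ssets: "S \<in> sets (lborel \<Otimes>\<^sub>M lborel)" unfolding S_def by (intro pair_measureI) auto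
  have Sfin: "emeasure (lborel \<Otimes>\<^sub>M lborel) S < \<infinity>"
  proof -
    have "emeasure (lborel \<Otimes>\<^sub>M lborel) S = emeasure lborel {-R1..R1} * emeasure lborel {-(R1+R2)..R1+R2}"
      unfolding S_def by (rule lborel.emeasure_pair_measure_Times) auto
    also have "\<dots> < \<infinity>" using R1 R2 by (simp add: emeasure_lborel_Icc_eq ennreal_mult_less_top)
    finally show ?thesis .
  qed
  have int: "integrable (lborel \<Otimes>\<^sub>M lborel) (case_prod F)"
  proof (rule Bochner_Integration.integrable_bound)
    show "integrable (lborel \<Otimes>\<^sub>M lborel) (\<lambda>x. indicator S x * K :: real)"
      by (intro integrable_mult_left integrable_real_indicator Ssets Sfin)
    show "case_prod F \<in> borel_measurable (lborel \<Otimes>\<^sub>M lborel)"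
      unfolding F_def by measurable
    show "AE x in lborel \<Otimes>\<^sub>M lborel. norm (case_prod F x) \<le> norm (indicator S x * K)"
    proof (rule AE_I2, clarify)
      fix s t
      show "norm (F s t) \<le> norm (indicator S (s, t) * K)"
      proof (cases "(s, t) \<in> S")
        case True
        then have st: "\<bar>s\<bar> \<le> R1" "\<bar>t\<bar> \<le> R1 + R2" unfolding S_def by auto
        have "cmod (ef z t) \<le> exp (2 * pi * \<bar>Im z\<bar> * (R1 + R2))"
          unfolding norm_ef
        proof (subst exp_le_cancel_iff)
          have "Im z * t \<le> \<bar>Im z\<bar> * (R1 + R2)"
          proof -
            have "Im z * t \<le> \<bar>Im z * t\<bar>" by simp
            also have "\<dots> = \<bar>Im z\<bar> * \<bar>t\<bar>" by (simp add: abs_mult)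
            also have "\<dots> \<le> \<bar>Im z\<bar> * (R1 + R2)" using st(2) by (intro mult_left_mono) auto
            finally show ?thesis .
          qed
          then show "2 * pi * Im z * t \<le> 2 * pi * \<bar>Im z\<bar> * (R1 + R2)"
            by (simp add: mult.assoc)
        qed
        then have "norm (F s t) \<le> K"
          unfolding F_def K_def norm_mult
          by (intro mult_mono bf bh B1 B2 mult_nonneg_nonneg) auto
        then show ?thesis using True B1 B2 by (simp add: K_def)
      next
        case False
        then have "F s t = 0"
        proof (cases "\<bar>s\<bar> \<le> R1")
          case True
          then have "R2 < \<bar>t - s\<bar>" using False unfolding S_def by auto
          then show ?thesis unfolding F_def using sh by simp
        next
          case False then show ?thesis unfolding F_def using sf by simp
        qed
        then show ?thesis by simp
      qed
    qed
  qed
  have "c_fourier (conv f h) z = (LINT t|lborel. LINT s|lborel. F s t)"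
    unfolding c_fourier_ef conv_def F_def by (simp only: integral_mult_left_zero)
  also have "\<dots> = (LINT s|lborel. LINT t|lborel. F s t)"
    by (rule lborel_pair.Fubini_integral[OF int])
  also have "\<dots> = (LINT s|lborel. f s * ef z s * (LINT t|lborel. h (t - s) * ef z (t - s)))"
  proof -
    have "F s t = f s * ef z s * (h (t - s) * ef z (t - s))" for s t
      using ef_add[of z s "t - s"] unfolding F_def by (simp add: algebra_simps)
    then show ?thesis by (simp only: integral_mult_right_zero)
  qed
  also have "\<dots> = (LINT s|lborel. f s * ef z s * c_fourier h z)"
    unfolding c_fourier_ef by (subst translate_int) (rule refl)
  also have "\<dots> = c_fourier f z * c_fourier h z"
    unfolding c_fourier_ef by simp
  finally show ?thesis .
qed



lemma exp_has_int:
  fixes b :: complex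
  assumes "b \<noteq> 0" "p \<le> q"
  shows "((\<lambda>t. exp (t *\<^sub>R b)) has_integral ((exp (q *\<^sub>R b) - exp (p *\<^sub>R b)) / b)) {p..q}"
proof -
  have "((\<lambda>t. exp (t *\<^sub>R b)) has_integral ((1/b) * exp (q *\<^sub>R b) - (1/b) * exp (p *\<^sub>R b))) {p..q}"
  proof (rule fundamental_theorem_of_calculus[OF assms(2)])
    fix x assume "x \<in> {p..q}"
    show "((\<lambda>t. (1/b) * exp (t *\<^sub>R b)) has_vector_derivative exp (x *\<^sub>R b)) (at x within {p..q})"
      by (rule has_vector_derivative_eq_rhs[OF has_vector_derivative_mult_right[OF exp_scaleR_has_vector_derivative_right]])
         (use assms in simp)
  qed
  then show ?thesis by (simp add: diff_divide_distrib)
qed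

lemma ofreal_exp_ef:
  "complex_of_real (exp (a * t)) * ef z t = exp (t *\<^sub>R (complex_of_real a - 2 * complex_of_real pi * \<i> * z))"
  unfolding ef_def scaleR_conv_of_real of_real_exp exp_add[symmetric]
  by (simp add: algebra_simps)

definition LL :: "real \<Rightarrow> real" where "LL A = 2 * pi * A"

definition gr :: "real \<Rightarrow> real \<Rightarrow> real" where
  "gr A t = (if t \<in> {-1..1} then (pi / A) *
     (if t \<le> 0 then exp (LL A * t) - exp (- LL A) ^ 2 * exp ((- LL A) * t)
      else exp ((- LL A) * t) - exp (- LL A) ^ 2 * exp (LL A * t)) else 0)"

definition g :: "real \<Rightarrow> real \<Rightarrow> complex" where "g A t = complex_of_real (gr A t)"

lemma g_good:
  assumes A: "0 < A"
  shows "good 1 (pi / A) (g A)"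
proof -
  have L: "0 \<le> LL A" using A by (simp add: LL_def)
  have "g A \<in> borel_measurable borel" unfolding g_def[abs_def] gr_def by measurable
  moreover have "cmod (g A t) \<le> pi / A" for t
  proof (cases "t \<in> {-1..1}")
    case True
    have e1: "exp (- LL A) ^ 2 * exp (LL A) \<le> 1"
      using L by (simp add: power2_eq_square flip: exp_add)
    have bnd: "\<bar>x - y\<bar> \<le> 1" if "0 \<le> x" "x \<le> 1" "0 \<le> y" "y \<le> 1" for x y :: real
      using that by linarith
    have "\<bar>(if t \<le> 0 then exp (LL A * t) - exp (- LL A) ^ 2 * exp ((- LL A) * t)
      else exp ((- LL A) * t) - exp (- LL A) ^ 2 * exp (LL A * t))\<bar> \<le> 1"
    proof (cases "t \<le> 0")
      case True2: True
      have "LL A * (-t) \<le> LL A * 1" using \<open>t \<in> {-1..1}\<close> L by (intro mult_left_mono) auto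
      then have "exp ((- LL A) * t) \<le> exp (LL A)" by simp
      then have "exp (- LL A) ^ 2 * exp ((- LL A) * t) \<le> 1"
        using e1 by (meson dual_order.trans mult_left_mono zero_le_power exp_ge_zero)
      moreover have "exp (LL A * t) \<le> 1" using L True2 by (simp add: mult_nonneg_nonpos)
      ultimately have "\<bar>exp (LL A * t) - exp (- LL A) ^ 2 * exp ((- LL A) * t)\<bar> \<le> 1"
        by (intro bnd) auto
      then show ?thesis using True2 by simp
    next
      case False2: False
      have "LL A * t \<le> LL A * 1" using \<open>t \<in> {-1..1}\<close> L by (intro mult_left_mono) auto
      then have "exp (LL A * t) \<le> exp (LL A)" by simp
      then have "exp (- LL A) ^ 2 * exp (LL A * t) \<le> 1"
        using e1 by (meson dual_order.trans mult_left_mono zero_le_power exp_ge_zero)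
      moreover have "exp ((- LL A) * t) \<le> 1" using L False2 by simp
      ultimately have "\<bar>exp ((- LL A) * t) - exp (- LL A) ^ 2 * exp (LL A * t)\<bar> \<le> 1"
        by (intro bnd) auto
      then show ?thesis using False2 by simp
    qed
    then have "pi / A * \<bar>(if t \<le> 0 then exp (LL A * t) - exp (- LL A) ^ 2 * exp ((- LL A) * t)
      else exp ((- LL A) * t) - exp (- LL A) ^ 2 * exp (LL A * t))\<bar> \<le> pi / A * 1"
      using A by (intro mult_left_mono) auto
    then show ?thesis using True A unfolding g_def gr_def norm_of_real
      by (simp add: abs_mult)
  next
    case False
    then have "gr A t = 0" unfolding gr_def by (rule if_not_P)
    then show ?thesis using A unfolding g_def by simp
  qed
  moreover have "g A t = 0" if "1 < \<bar>t\<bar>" for t using that unfolding g_def gr_def by auto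
  ultimately show ?thesis unfolding good_def by blast
qed



lemma alg1:
  fixes V u b1 b2 c :: complex
  assumes "V \<noteq> 0" "u \<noteq> 0" "b1 \<noteq> 0" "b2 \<noteq> 0"
  shows "c*((V*u - 1)/b1 - V^2*((u/V - 1)/b2)) + c*((1 - V/u)/b2 - V^2*((1 - 1/(V*u))/b1))
       = c*((1 - V*u)*(1 - V/u))*(1/b2 - 1/b1)"
  using assms by (simp add: field_simps power2_eq_square)

lemma alg2:
  fixes z :: complex and A :: real
  assumes A: "0 < A"
    and b1: "b1 = complex_of_real (- (2*pi*A)) - 2 * complex_of_real pi * \<i> * z"
    and b2: "b2 = complex_of_real (2*pi*A) - 2 * complex_of_real pi * \<i> * z"
    and nz: "b1 \<noteq> 0" "b2 \<noteq> 0"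
  shows "complex_of_real (pi / A) * (1/b2 - 1/b1) = 1 / (z^2 + (complex_of_real A)^2)"
proof -
  have prod: "b1 * b2 = - (4 * (complex_of_real pi)^2) * (z^2 + (complex_of_real A)^2)"
    unfolding b1 b2 by (simp add: algebra_simps power2_eq_square)
  have diff: "b1 - b2 = - (4 * complex_of_real pi * complex_of_real A)"
    unfolding b1 b2 by (simp add: algebra_simps)
  have q: "z^2 + (complex_of_real A)^2 \<noteq> 0" using prod nz by auto
  have "1/b2 - 1/b1 = (b1 - b2) / (b1 * b2)" using nz by (simp add: field_simps)
  also have "\<dots> = (4 * complex_of_real pi * complex_of_real A) / (4 * (complex_of_real pi)^2 * (z^2 + (complex_of_real A)^2))"
    unfolding prod diff by simp
  finally have e: "1/b2 - 1/b1 = (4 * complex_of_real pi * complex_of_real A) / (4 * (complex_of_real pi)^2 * (z^2 + (complex_of_real A)^2))" .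
  have a0: "complex_of_real A \<noteq> 0" "complex_of_real pi \<noteq> 0" using A by auto
  have gen: "(p / a) * (4 * p * a / (4 * p^2 * Q)) = 1 / Q" if "Q \<noteq> 0" "a \<noteq> 0" "p \<noteq> 0" for p a Q :: complex
    using that by (simp add: field_simps power2_eq_square)
  show ?thesis unfolding e using gen[OF q a0(1) a0(2)] by simp
qed



lemma good_fourier_set:
  assumes f: "good R B f" and R: "0 \<le> R"
  shows "c_fourier f z = integral {-R..R} (\<lambda>t. f t * ef z t)"
proof -
  have [measurable]: "f \<in> borel_measurable borel" using f by (auto simp: good_def)
  have bf: "\<And>t. cmod (f t) \<le> B" and sf: "\<And>t. R < \<bar>t\<bar> \<Longrightarrow> f t = 0"
    using f by (auto simp: good_def)
  have B: "0 \<le> B" using bf[of 0] norm_ge_zero order_trans by blast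
  have int: "integrable lborel (\<lambda>t. f t * ef z t)"
  proof (rule intg_bdd)
    show "(\<lambda>t. f t * ef z t) \<in> borel_measurable borel" by measurable
    fix t
    show "cmod (f t * ef z t) \<le> B * exp (2 * pi * \<bar>Im z\<bar> * R)"
    proof (cases "\<bar>t\<bar> \<le> R")
      case True
      have "Im z * t \<le> \<bar>Im z * t\<bar>" by simp
      also have "\<dots> = \<bar>Im z\<bar> * \<bar>t\<bar>" by (simp add: abs_mult)
      also have "\<dots> \<le> \<bar>Im z\<bar> * R" using True by (intro mult_left_mono) auto
      finally have "2 * pi * Im z * t \<le> 2 * pi * \<bar>Im z\<bar> * R" by (simp add: mult.assoc)
      then have "cmod (ef z t) \<le> exp (2 * pi * \<bar>Im z\<bar> * R)" unfolding norm_ef by simp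
      then show ?thesis unfolding norm_mult by (intro mult_mono bf B) auto
    next
      case False then show ?thesis using sf B by simp
    qed
  next
    fix t assume "R < \<bar>t\<bar>" then show "f t * ef z t = 0" using sf by simp
  qed
  have eq: "(\<lambda>t. f t * ef z t) = (\<lambda>t. indicator {-R..R} t *\<^sub>R (f t * ef z t))"
    using sf by (auto simp: indicator_def abs_le_iff fun_eq_iff not_le)
  have si: "set_integrable lborel {-R..R} (\<lambda>t. f t * ef z t)"
    unfolding set_integrable_def using int eq by metis
  have "c_fourier f z = (LINT t:{-R..R}|lborel. f t * ef z t)"
    unfolding c_fourier_ef set_lebesgue_integral_def using eq by metis
  also have "\<dots> = integral {-R..R} (\<lambda>t. f t * ef z t)"
    by (rule set_borel_integral_eq_integral(2)[OF si])
  finally show ?thesis .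
qed


lemma g_fourier:
  fixes A :: real and z :: complex
  assumes A: "0 < A"
    and nz1: "complex_of_real (- (2*pi*A)) - 2 * complex_of_real pi * \<i> * z \<noteq> 0"
    and nz2: "complex_of_real (2*pi*A) - 2 * complex_of_real pi * \<i> * z \<noteq> 0"
  shows "c_fourier (g A) z = (1 - complex_of_real (exp (- (2*pi*A))) * exp (- (2 * complex_of_real pi * \<i> * z)))
      * (1 - complex_of_real (exp (- (2*pi*A))) / exp (- (2 * complex_of_real pi * \<i> * z))) / (z^2 + (complex_of_real A)^2)"
proof -
  define b1 where "b1 = complex_of_real (- (2*pi*A)) - 2 * complex_of_real pi * \<i> * z"
  define b2 where "b2 = complex_of_real (2*pi*A) - 2 * complex_of_real pi * \<i> * z"
  define V where "V = complex_of_real (exp (- (2*pi*A)))"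
  define u where "u = exp (- (2 * complex_of_real pi * \<i> * z))"
  define c where "c = complex_of_real (pi / A)"
  define k where "k = (\<lambda>t. g A t * ef z t)"
  have b1nz: "b1 \<noteq> 0" and b2nz: "b2 \<noteq> 0" using nz1 nz2 by (simp_all add: b1_def b2_def)
  have Vnz: "V \<noteq> 0" and unz: "u \<noteq> 0" by (simp_all add: V_def u_def)
  have k1: "k t = c * (exp (t *\<^sub>R b1) - V^2 * exp (t *\<^sub>R b2))" if "t \<in> {0..1}" for t
  proof (cases "t \<le> 0")
    case True
    then have "t = 0" using that by simp
    then show ?thesis
      by (simp add: k_def g_def gr_def ef_def c_def V_def LL_def of_real_exp power2_eq_square flip: exp_add)
  next
    case False
    then have gA: "g A t = c * (complex_of_real (exp ((- (2*pi*A)) * t)) - V^2 * complex_of_real (exp ((2*pi*A) * t)))"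
      using that by (simp add: g_def gr_def c_def V_def LL_def)
    then have "k t = c * (complex_of_real (exp ((- (2*pi*A)) * t)) * ef z t - V^2 * (complex_of_real (exp ((2*pi*A) * t)) * ef z t))"
      unfolding k_def gA by (simp add: algebra_simps)
    then show ?thesis unfolding ofreal_exp_ef b1_def b2_def .
  qed
  have k2: "k t = c * (exp (t *\<^sub>R b2) - V^2 * exp (t *\<^sub>R b1))" if "t \<in> {-1..0}" for t
  proof -
    have gA: "g A t = c * (complex_of_real (exp ((2*pi*A) * t)) - V^2 * complex_of_real (exp ((- (2*pi*A)) * t)))"
      using that by (simp add: g_def gr_def c_def V_def LL_def)
    then have "k t = c * (complex_of_real (exp ((2*pi*A) * t)) * ef z t - V^2 * (complex_of_real (exp ((- (2*pi*A)) * t)) * ef z t))"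
      unfolding k_def gA by (simp add: algebra_simps)
    then show ?thesis unfolding ofreal_exp_ef b1_def b2_def .
  qed
  have int1: "(k has_integral c * ((exp b1 - 1) / b1 - V^2 * ((exp b2 - 1) / b2))) {0..1}"
  proof (rule has_integral_eq[OF k1[symmetric]])
    show "((\<lambda>t. c * (exp (t *\<^sub>R b1) - V^2 * exp (t *\<^sub>R b2))) has_integral
        c * ((exp b1 - 1) / b1 - V^2 * ((exp b2 - 1) / b2))) {0..1}"
      using has_integral_mult_right[OF has_integral_diff[OF exp_has_int[OF b1nz, of 0 1]
          has_integral_mult_right[OF exp_has_int[OF b2nz, of 0 1], of "V^2"]], of c]
      by simp
  qed
  have int2: "(k has_integral c * ((1 - exp (- b2)) / b2 - V^2 * ((1 - exp (- b1)) / b1))) {-1..0}"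
  proof (rule has_integral_eq[OF k2[symmetric]])
    show "((\<lambda>t. c * (exp (t *\<^sub>R b2) - V^2 * exp (t *\<^sub>R b1))) has_integral
        c * ((1 - exp (- b2)) / b2 - V^2 * ((1 - exp (- b1)) / b1))) {-1..0}"
      using has_integral_mult_right[OF has_integral_diff[OF exp_has_int[OF b2nz, of "-1" 0]
          has_integral_mult_right[OF exp_has_int[OF b1nz, of "-1" 0], of "V^2"]], of c]
      by simp
  qed
  have "(k has_integral (c * ((1 - exp (- b2)) / b2 - V^2 * ((1 - exp (- b1)) / b1))
      + c * ((exp b1 - 1) / b1 - V^2 * ((exp b2 - 1) / b2)))) {-1..1}"
    by (rule has_integral_combine[OF _ _ int2 int1]) auto
  then have "c_fourier (g A) z = c * ((1 - exp (- b2)) / b2 - V^2 * ((1 - exp (- b1)) / b1))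
      + c * ((exp b1 - 1) / b1 - V^2 * ((exp b2 - 1) / b2))"
    using good_fourier_set[OF g_good[OF A], of z] unfolding k_def by (simp add: integral_unique)
  moreover have "exp b1 = V * u" "exp b2 = u / V" "exp (- b1) = 1 / (V * u)" "exp (- b2) = V / u"
    unfolding b1_def b2_def V_def u_def
    by (simp_all add: exp_diff exp_minus of_real_exp field_simps flip: exp_add)
  ultimately have "c_fourier (g A) z = c * ((1 - V/u) / b2 - V^2 * ((1 - 1/(V*u)) / b1))
      + c * ((V*u - 1) / b1 - V^2 * ((u/V - 1) / b2))"
    by (simp only:)
  also have "\<dots> = c * ((1 - V*u) * (1 - V/u)) * (1/b2 - 1/b1)"
    by (subst add.commute) (rule alg1[OF Vnz unz b1nz b2nz])
  also have "\<dots> = ((1 - V*u) * (1 - V/u)) * (c * (1/b2 - 1/b1))"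
    by (simp only: mult_ac)
  also have "\<dots> = ((1 - V*u) * (1 - V/u)) * (1 / (z^2 + (complex_of_real A)^2))"
    unfolding c_def alg2[OF A b1_def b2_def b1nz b2nz] ..
  also have "\<dots> = (1 - V*u) * (1 - V/u) / (z^2 + (complex_of_real A)^2)"
    by simp
  finally show ?thesis unfolding V_def u_def .
qed



lemma mul1:
  fixes x y :: complex
  assumes "cmod (x - 1) \<le> D1 - 1" "cmod (y - 1) \<le> D2 - 1" "1 \<le> D1" "1 \<le> D2"
  shows "cmod (x * y - 1) \<le> D1 * D2 - 1"
proof -
  have e: "x * y - 1 = (x - 1) * (y - 1) + (x - 1) + (y - 1)" by (simp add: algebra_simps)
  have "cmod (x * y - 1) \<le> cmod ((x - 1) * (y - 1)) + cmod (x - 1) + cmod (y - 1)"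
    unfolding e using norm_triangle_ineq[of "(x - 1) * (y - 1) + (x - 1)" "y - 1"]
      norm_triangle_ineq[of "(x - 1) * (y - 1)" "x - 1"] by linarith
  also have "\<dots> \<le> (D1 - 1) * (D2 - 1) + (D1 - 1) + (D2 - 1)"
    unfolding norm_mult using assms by (intro add_mono mult_mono) auto
  also have "\<dots> = D1 * D2 - 1" by (simp add: algebra_simps)
  finally show ?thesis .
qed

lemma pow1:
  fixes x :: complex
  assumes "cmod (x - 1) \<le> D - 1" "1 \<le> D"
  shows "cmod (x ^ n - 1) \<le> D ^ n - 1"
proof (induction n)
  case 0 then show ?case by simp
next
  case (Suc n)
  have "cmod (x * x ^ n - 1) \<le> D * D ^ n - 1"
    by (rule mul1[OF assms(1) Suc assms(2)]) (use assms(2) in \<open>simp add: one_le_power\<close>)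
  then show ?case by simp
qed

lemma exp_half: "exp (1/2 :: real) < 2"
proof (rule ccontr)
  assume "\<not> exp (1/2 :: real) < 2"
  then have "2 * 2 \<le> exp (1/2 :: real) * exp (1/2)" by (intro mult_mono) auto
  also have "\<dots> = exp 1" by (simp flip: exp_add)
  finally show False using exp_le by simp
qed

lemma bern: "0 \<le> e \<Longrightarrow> (1 + e) ^ n \<le> exp (real n * e)"
proof -
  assume e: "0 \<le> e"
  have "(1 + e) ^ n \<le> exp e ^ n" by (rule power_mono) (use e in auto)
  also have "\<dots> = exp (real n * e)" by (simp add: exp_of_nat_mult)
  finally show ?thesis .
qed


lemma key:
  fixes H A e :: real and N :: nat and z :: complex
  assumes H: "0 < H" and e: "0 < e" "e \<le> 1" "3 * real N * e \<le> 1/2"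
    and A1: "2*H + 1 \<le> A" and Aexp: "exp (-(2*pi*(A - H))) \<le> e" and AH: "H \<le> e * (A - H)"
    and z: "\<bar>Im z\<bar> \<le> H"
  shows "0 < Re ((c_fourier (g A) z)^N)" "cmod (c_fourier (g A) z) \<le> 4 / ((cmod z)^2 + 1)"
proof -
  have A: "0 < A" using H A1 by linarith
  define x where "x = Re z"
  define y where "y = Im z"
  define V where "V = complex_of_real (exp (- (2*pi*A)))"
  define u where "u = exp (- (2 * complex_of_real pi * \<i> * z))"
  define q where "q = z^2 + (complex_of_real A)^2"
  define p where "p = Re q"
  have yH: "y \<le> H" "- y \<le> H" using z by (auto simp: y_def)
  have r1: "Re (complex_of_real (- (2*pi*A)) - 2 * complex_of_real pi * \<i> * z) = 2*pi*y - 2*pi*A"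
    by (simp add: y_def)
  have r2: "Re (complex_of_real (2*pi*A) - 2 * complex_of_real pi * \<i> * z) = 2*pi*y + 2*pi*A"
    by (simp add: y_def)
  have "2*pi*y < 2*pi*A" using yH A1 H by (intro mult_strict_left_mono) auto
  then have nz1: "complex_of_real (- (2*pi*A)) - 2 * complex_of_real pi * \<i> * z \<noteq> 0"
    using r1 by (metis less_irrefl right_minus_eq zero_complex.sel(1))
  have "2*pi*(-y) < 2*pi*A" using yH A1 H by (intro mult_strict_left_mono) auto
  then have nz2: "complex_of_real (2*pi*A) - 2 * complex_of_real pi * \<i> * z \<noteq> 0"
    using r2 by (metis add.inverse_inverse add_eq_0_iff less_irrefl minus_mult_right zero_complex.sel(1))
  have Gf: "c_fourier (g A) z = (1 - V*u) * (1 - V/u) / q"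
    unfolding g_fourier[OF A nz1 nz2] V_def u_def q_def ..
  have nu: "cmod u = exp (2*pi*y)" unfolding u_def y_def by simp
  have VU1: "cmod (V*u) \<le> e"
  proof -
    have "cmod (V*u) = exp (- (2*pi*A) + 2*pi*y)" unfolding norm_mult nu V_def by (simp flip: exp_add)
    also have "\<dots> \<le> exp (-(2*pi*(A - H)))" using yH by (simp add: algebra_simps)
    finally show ?thesis using Aexp by linarith
  qed
  have VU2: "cmod (V/u) \<le> e"
  proof -
    have "cmod (V/u) = exp (- (2*pi*A) - 2*pi*y)" unfolding norm_divide nu V_def by (simp flip: exp_diff)
    also have "\<dots> \<le> exp (-(2*pi*(A - H)))" using mult_left_mono[OF yH(2), of pi] by (simp add: algebra_simps)
    finally show ?thesis using Aexp by linarith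
  qed
  have Req: "p = x^2 - y^2 + A^2" unfolding p_def q_def x_def y_def by (simp add: power2_eq_square)
  have Imq: "Im q = 2 * x * y" unfolding q_def x_def y_def by (simp add: power2_eq_square)
  have y2: "y^2 \<le> H^2"
  proof -
    have "\<bar>y\<bar>^2 \<le> H^2" using yH by (intro power_mono) auto
    then show ?thesis by simp
  qed
  have A2: "(2*H+1)^2 \<le> A^2" using A1 H by (intro power_mono) auto
  have sq: "(2*H+1)^2 = 4*H^2 + 4*H + 1" by (simp add: power2_eq_square algebra_simps)
  have "2*y^2 + 1 \<le> A^2" using y2 A2 H sq zero_le_power2[of H] by linarith
  then have p1: "(cmod z)^2 + 1 \<le> p"
    unfolding Req cmod_power2 x_def[symmetric] y_def[symmetric] by linarith
  have p0: "0 < p" using p1 by (smt (verit) zero_le_power2)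
  have Imb: "\<bar>Im q\<bar> \<le> e * p"
  proof -
    have "\<bar>Im q\<bar> = 2 * \<bar>x\<bar> * \<bar>y\<bar>" unfolding Imq by (simp add: abs_mult)
    also have "\<dots> \<le> 2 * \<bar>x\<bar> * H" using yH by (intro mult_left_mono) auto
    also have "\<dots> \<le> 2 * \<bar>x\<bar> * (e * (A - H))" using AH by (intro mult_left_mono) auto
    also have "\<dots> = e * (2 * \<bar>x\<bar> * (A - H))" by (simp add: algebra_simps)
    also have "\<dots> \<le> e * (x^2 + (A - H)^2)"
    proof -
      have "0 \<le> (\<bar>x\<bar> - (A - H))^2" by simp
      then have "2 * \<bar>x\<bar> * (A - H) \<le> x^2 + (A - H)^2"
        by (simp add: power2_eq_square algebra_simps)
      then show ?thesis using e by (intro mult_left_mono) auto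
    qed
    also have "\<dots> \<le> e * p"
    proof -
      have hh: "H*H \<le> A*H" using H A1 by (intro mult_right_mono) auto
      have "(A - H)^2 + y^2 \<le> A^2"
        using y2 hh unfolding power2_eq_square by (simp add: algebra_simps)
      then show ?thesis unfolding Req using e by (intro mult_left_mono) auto
    qed
    finally show ?thesis .
  qed
  have qn: "p \<le> cmod q" unfolding p_def using abs_Re_le_cmod[of q] by linarith
  then have qnz: "q \<noteq> 0" using p0 by auto
  have x3: "cmod (complex_of_real p / q - 1) \<le> e"
  proof -
    have "complex_of_real p - q = - (\<i> * complex_of_real (Im q))"
      unfolding p_def by (simp add: complex_eq_iff)
    moreover have "complex_of_real p / q - 1 = (complex_of_real p - q) / q"
      using qnz by (simp add: diff_divide_distrib)
    ultimately have "complex_of_real p / q - 1 = - (\<i> * complex_of_real (Im q)) / q"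
      by simp
    then have "cmod (complex_of_real p / q - 1) = \<bar>Im q\<bar> / cmod q"
      by (simp add: norm_divide norm_mult)
    also have "\<dots> \<le> \<bar>Im q\<bar> / p" proof (rule divide_left_mono)
      have "0 < cmod q" using qn p0 by linarith
      then show "0 < cmod q * p" using p0 by simp
    qed (use qn in auto)
    also have "\<dots> \<le> e" using Imb p0 by (simp add: divide_le_eq mult.commute)
    finally show ?thesis .
  qed
  define W where "W = (1 - V*u) * (1 - V/u) * (complex_of_real p / q)"
  have W1: "cmod (W - 1) \<le> (1+e)^3 - 1"
  proof -
    have one_le_mult_iff: "1 \<le> a * b \<longleftrightarrow> True" if "1 \<le> a" "1 \<le> b" for a b :: real
      using mult_mono[OF that] that by auto
    have a: "cmod ((1 - V*u) - 1) \<le> (1+e) - 1" using VU1 by simp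
    have b: "cmod ((1 - V/u) - 1) \<le> (1+e) - 1" using VU2 by simp
    have c: "cmod (complex_of_real p / q - 1) \<le> (1+e) - 1" using x3 by simp
    have ab: "cmod ((1 - V*u) * (1 - V/u) - 1) \<le> (1+e)*(1+e) - 1"
      by (rule mul1[OF a b]) (use e in auto)
    have "cmod (W - 1) \<le> ((1+e)*(1+e))*(1+e) - 1"
      unfolding W_def by (rule mul1[OF ab c]) (use e in \<open>auto intro: one_le_mult_iff[THEN iffD2]\<close>)
    then show ?thesis by (simp add: power3_eq_cube)
  qed
  have GW: "c_fourier (g A) z = W / complex_of_real p"
    unfolding Gf W_def using qnz p0 by (simp add: field_simps)
  have WN: "cmod (W^N - 1) < 1"
  proof -
    have "cmod (W^N - 1) \<le> ((1+e)^3)^N - 1"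
      by (rule pow1[OF W1]) (use e in \<open>simp add: one_le_power\<close>)
    also have "((1+e)^3)^N = (1+e)^(3*N)" by (simp add: power_mult)
    also have "(1+e)^(3*N) \<le> exp (real (3*N) * e)" by (rule bern) (use e in auto)
    also have "\<dots> \<le> exp (1/2)" using e by simp
    finally show ?thesis using exp_half by linarith
  qed
  have ReW: "0 < Re (W^N)"
  proof -
    have "\<bar>Re (W^N - 1)\<bar> \<le> cmod (W^N - 1)" by (rule abs_Re_le_cmod)
    then show ?thesis using WN by simp
  qed
  show "0 < Re ((c_fourier (g A) z)^N)"
    unfolding GW power_divide of_real_power[symmetric] Re_divide_of_real
    using ReW p0 by simp
  have zp: "0 < (cmod z)^2 + 1" using zero_le_power2[of "cmod z"] by linarith
  have "cmod (c_fourier (g A) z) = cmod (1 - V*u) * cmod (1 - V/u) / cmod q"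
    unfolding Gf by (simp add: norm_mult norm_divide)
  also have "\<dots> \<le> (1 + e) * (1 + e) / ((cmod z)^2 + 1)"
  proof (rule frac_le)
    show "cmod (1 - V*u) * cmod (1 - V/u) \<le> (1 + e) * (1 + e)"
      using VU1 VU2 norm_triangle_ineq4[of 1 "V*u"] norm_triangle_ineq4[of 1 "V/u"] e
      by (intro mult_mono) auto
  qed (use qn p1 e zp in auto)
  also have "\<dots> \<le> 4 / ((cmod z)^2 + 1)"
    using e by (intro divide_right_mono) (auto intro: order_trans[OF mult_mono[of _ 2 _ 2]])
  finally show "cmod (c_fourier (g A) z) \<le> 4 / ((cmod z)^2 + 1)" .
qed



fun cp :: "real \<Rightarrow> nat \<Rightarrow> real \<Rightarrow> complex" where
  "cp A 0 = g A"
| "cp A (Suc n) = conv (g A) (cp A n)"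

lemma cp_good: "0 < A \<Longrightarrow> \<exists>B. good (real n + 1) B (cp A n)"
proof (induction n)
  case 0 then show ?case using g_good by auto
next
  case (Suc n)
  then obtain B where "good (real n + 1) B (cp A n)" by auto
  from conv_good[OF g_good[OF Suc.prems] this] have "good (1 + (real n + 1)) (pi / A * B * (2 * 1)) (cp A (Suc n))"
    by simp
  then show ?case by (auto simp: add.commute)
qed

lemma cp_fourier: "0 < A \<Longrightarrow> c_fourier (cp A n) z = c_fourier (g A) z ^ Suc n"
proof (induction n)
  case 0 then show ?case by simp
next
  case (Suc n)
  obtain B where "good (real n + 1) B (cp A n)" using cp_good[OF Suc.prems] by auto
  from conv_fourier[OF g_good[OF Suc.prems] this] Suc show ?case by simp
qed

theorem mainTheorem4:
  fixes H :: real and m :: nat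
  assumes "H > 0"
  shows "\<exists>Psi :: real \<Rightarrow> complex.
           integrable lborel Psi \<and>
           (\<exists>K. compact K \<and> (\<forall>t. t \<notin> K \<longrightarrow> Psi t = 0)) \<and>
           (\<exists>C>0. \<forall>z\<in>strip H. cmod (c_fourier Psi z) \<le> C * (max 1 (cmod z)) powr (- real m)) \<and>
           (\<forall>z\<in>strip H. Re (c_fourier Psi z) > 0)"
proof -
  have H: "0 < H" by (rule assms)
  define N where "N = Suc m"
  define e :: real where "e = 1 / (6 * real N)"
  define D :: real where "D = 6 * real N * (1 + H) + H + 1"
  define A where "A = H + D"
  have N1: "1 \<le> real N" by (simp add: N_def)
  have e0: "0 < e" "e \<le> 1" using N1 by (auto simp: e_def)
  have e3: "3 * real N * e \<le> 1/2" using N1 by (simp add: e_def)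
  have A1: "2*H + 1 \<le> A" unfolding A_def D_def using H N1 by simp
  have A0: "0 < A" using A1 H by linarith
  have DN: "6 * real N \<le> D" "6 * real N * H \<le> D" unfolding D_def using H N1 by (auto simp: algebra_simps)
  have Aexp: "exp (-(2*pi*(A - H))) \<le> e"
  proof -
    have AH: "A - H = D" by (simp add: A_def)
    have "1 + 2*pi*D \<le> exp (2*pi*D)" by simp
    moreover have "D \<le> 2*pi*D" using DN N1 pi_gt3 by (intro mult_right_mono[of 1 "2*pi" D, simplified]) auto
    ultimately have "6 * real N \<le> exp (2*pi*D)" using DN by linarith
    then have "inverse (exp (2*pi*D)) \<le> inverse (6 * real N)" using N1 by (intro le_imp_inverse_le) auto
    then show ?thesis unfolding AH e_def by (simp add: exp_minus inverse_eq_divide)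
  qed
  have AH: "H \<le> e * (A - H)"
  proof -
    have "H = (6 * real N * H) / (6 * real N)" using N1 by simp
    also have "\<dots> \<le> D / (6 * real N)" using DN N1 by (intro divide_right_mono) auto
    finally show ?thesis by (simp add: e_def A_def)
  qed
  define Psi where "Psi = cp A m"
  obtain B where gd: "good (real m + 1) B Psi" using cp_good[OF A0] unfolding Psi_def by auto
  have int: "integrable lborel Psi"
    using gd unfolding good_def by (intro intg_bdd[of Psi B "real m + 1"]) auto
  have supp: "\<exists>K. compact K \<and> (\<forall>t. t \<notin> K \<longrightarrow> Psi t = 0)"
    using gd unfolding good_def by (intro exI[of _ "{-(real m + 1)..real m + 1}"]) auto
  have cf: "c_fourier Psi z = c_fourier (g A) z ^ N" for z
    unfolding Psi_def N_def by (rule cp_fourier[OF A0])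
  have zH: "\<bar>Im z\<bar> \<le> H" if "z \<in> strip H" for z using that by (simp add: strip_def)
  have pos: "\<forall>z\<in>strip H. Re (c_fourier Psi z) > 0"
    using key(1)[OF H e0 e3 A1 Aexp AH zH] cf by simp
  have dec: "cmod (c_fourier Psi z) \<le> 4^N * (max 1 (cmod z)) powr (- real m)" if z: "z \<in> strip H" for z
  proof -
    define M where "M = max 1 (cmod z)"
    define s where "s = (cmod z)^2 + 1"
    have M1: "1 \<le> M" by (simp add: M_def)
    have Ms: "M^2 \<le> s" unfolding M_def s_def
      by (cases "1 \<le> cmod z") (auto simp: max_def power2_eq_square)
    have s0: "0 < s" using Ms M1 by (smt (verit) one_le_power)
    have "cmod (c_fourier Psi z) = cmod (c_fourier (g A) z) ^ N" unfolding cf by (simp add: norm_power)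
    also have "\<dots> \<le> (4 / s) ^ N"
      using key(2)[OF H e0 e3 A1 Aexp AH zH[OF z]] unfolding s_def by (intro power_mono) auto
    also have "\<dots> = 4^N / s^N" by (simp add: power_divide)
    also have "\<dots> \<le> 4^N / M^m"
    proof (rule divide_left_mono)
      have "M^m \<le> M^(2*N)" using M1 by (intro power_increasing) (auto simp: N_def)
      also have "\<dots> = (M^2)^N" by (simp add: power_mult)
      also have "\<dots> \<le> s^N" using Ms M1 by (intro power_mono) auto
      finally show "M^m \<le> s^N" .
      show "0 < s^N * M^m" using s0 M1 by simp
    qed simp
    also have "\<dots> = 4^N * M powr (- real m)"
      using M1 by (simp add: powr_minus powr_realpow divide_inverse)
    finally show ?thesis unfolding M_def .
  qed
  show ?thesis
    using int supp pos dec by (intro exI[of _ Psi]) (auto intro!: exI[of _ "4^N"])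
qed

end
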